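(* Let $f:\mathbb{R}^n_{>0}\to\mathbb{R}^n_{>0}$ be order-preserving and homogeneous. If $r(f^J_0)>\lambda(f^{[n]\setminus J}_\infty)$ for some nonempty proper subset $J\subset[n]$, then $f$ has no eigenvectors in $\mathbb{R}^n_{>0}$.
   Context: $[n]=\{1,\dots,n\}$; entrywise order. Order-preserving: $x\le y\Rightarrow f(x)\le f(y)$; homogeneous: $f(tx)=tf(x)$ for $t>0$. Such $f$ extends continuously to order-preserving homogeneous maps $\mathbb{R}^n_{\ge0}\to\mathbb{R}^n_{\ge0}$ and $(0,\infty]^n\to(0,\infty]^n$, again denoted $f$. For $\alpha\in[-\infty,\infty]$, $J\subseteq[n]$: $P^J_\alpha(x)_j=x_j$ for $j\in J$, $=\alpha$ otherwise; $f^J_0=P^J_0fP^J_0$, $f^J_\infty=P^J_\infty fP^J_\infty$. For $g$ order-preserving homogeneous on $\mathbb{R}^n_{\ge0}$ or $(0,\infty]^n$: $r(g)=\inf_{x\in\mathbb{R}^n_{>0}}\max_i g(x)_i/x_i$, $\lambda(g)=\sup_{x\in\mathbb{R}^n_{>0}}\min_i g(x)_i/x_i$ (values in $[0,\infty]$). *)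

theory Defs
  imports "HOL-Analysis.Analysis" "HOL-Library.Extended_Real"
begin

text \<open>Vectors in R^n are modelled as real^'n for a finite index type 'n (so [n] = UNIV).
  The map f is a total function, but all hypotheses concern only its values on
  the open positive cone.\<close>

definition pos_vec :: "real^'n \<Rightarrow> bool" where
  "pos_vec x \<longleftrightarrow> (\<forall>i. 0 < x $ i)"

definition maps_pos :: "(real^'n \<Rightarrow> real^'n) \<Rightarrow> bool" where
  "maps_pos f \<longleftrightarrow> (\<forall>x. pos_vec x \<longrightarrow> pos_vec (f x))"

definition order_preserving_pos :: "(real^'n \<Rightarrow> real^'n) \<Rightarrow> bool" where
  "order_preserving_pos f \<longleftrightarrow>
     (\<forall>x y. pos_vec x \<and> pos_vec y \<and> (\<forall>i. x $ i \<le> y $ i) \<longrightarrow> (\<forall>i. f x $ i \<le> f y $ i))"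

definition homogeneous_pos :: "(real^'n \<Rightarrow> real^'n) \<Rightarrow> bool" where
  "homogeneous_pos f \<longleftrightarrow> (\<forall>x t. pos_vec x \<and> 0 < t \<longrightarrow> f (t *\<^sub>R x) = t *\<^sub>R f x)"

text \<open>Continuous extension to the closed cone R^n_{>=0}: f(x) = lim_{e->0+} f(x + e 1),
  which by monotonicity is the infimum over e > 0.\<close>
definition ext0 :: "(real^'n \<Rightarrow> real^'n) \<Rightarrow> real^'n \<Rightarrow> real^'n" where
  "ext0 f x = (\<chi> i. INF e\<in>{e::real. 0 < e}. f (\<chi> j. x $ j + e) $ i)"

text \<open>Continuous extension to (0,\<infinity>]^n: f(x) = lim_{t->\<infinity>} f(min(x, t 1)),
  which by monotonicity is the supremum over t > 0.\<close>
definition extinf :: "(real^'n \<Rightarrow> real^'n) \<Rightarrow> ereal^'n \<Rightarrow> ereal^'n" where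
  "extinf f x = (\<chi> i. SUP t\<in>{t::real. 0 < t}.
       ereal (f (\<chi> j. real_of_ereal (min (x $ j) (ereal t))) $ i))"

definition proj0 :: "'n set \<Rightarrow> real^'n \<Rightarrow> real^'n" where
  "proj0 J x = (\<chi> i. if i \<in> J then x $ i else 0)"

definition projinf :: "'n set \<Rightarrow> ereal^'n \<Rightarrow> ereal^'n" where
  "projinf J x = (\<chi> i. if i \<in> J then x $ i else \<infinity>)"

definition f0J :: "(real^'n \<Rightarrow> real^'n) \<Rightarrow> 'n set \<Rightarrow> real^'n \<Rightarrow> real^'n" where
  "f0J f J x = proj0 J (ext0 f (proj0 J x))"

definition finfJ :: "(real^'n \<Rightarrow> real^'n) \<Rightarrow> 'n set \<Rightarrow> ereal^'n \<Rightarrow> ereal^'n" where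
  "finfJ f J x = projinf J (extinf f (projinf J x))"

definition cw_r0 :: "(real^'n \<Rightarrow> real^'n) \<Rightarrow> ereal" where
  "cw_r0 g = (INF x\<in>{x. pos_vec x}. Max (range (\<lambda>i. ereal (g x $ i / x $ i))))"

definition cw_lambda_inf :: "(ereal^'n \<Rightarrow> ereal^'n) \<Rightarrow> ereal" where
  "cw_lambda_inf g = (SUP x\<in>{x. pos_vec x}.
       Min (range (\<lambda>i. g (\<chi> j. ereal (x $ j)) $ i / ereal (x $ i))))"

end

theory Submission
  imports Defs
begin

theorem theorem3p6:
  fixes f :: "real^'n \<Rightarrow> real^'n" and J :: "'n set"
  assumes "maps_pos f" and "order_preserving_pos f" and "homogeneous_pos f"
    and "J \<noteq> {}" and "J \<noteq> UNIV"
    and "cw_r0 (f0J f J) > cw_lambda_inf (finfJ f (UNIV - J))"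
  shows "\<not> (\<exists>v \<mu>. pos_vec v \<and> f v = \<mu> *\<^sub>R v)"
proof
  assume "\<exists>v \<mu>. pos_vec v \<and> f v = \<mu> *\<^sub>R v"
  then obtain v \<mu> where vp: "pos_vec v" and ev: "f v = \<mu> *\<^sub>R v" by blast
  have vpos: "\<And>j. 0 < v $ j" using vp by (simp add: pos_vec_def)
  have fvpos: "\<And>j. 0 < f v $ j" using assms(1) vp by (simp add: maps_pos_def pos_vec_def)
  obtain j0 :: 'n where True by blast
  have mupos: "0 < \<mu>" using fvpos[of j0] vpos[of j0] ev
    by (simp add: zero_less_mult_iff)
  define m where "m = Min (range (\<lambda>j. v $ j))"
  have mle: "\<And>j. m \<le> v $ j" unfolding m_def by (simp)
  have mpos: "0 < m" unfolding m_def using vpos by simp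
  define M where "M = Max (range (\<lambda>j. v $ j))"
  have Mge: "\<And>j. v $ j \<le> M" unfolding M_def by simp
  have Mpos: "0 < M" using Mge[of j0] vpos[of j0] by linarith
  have r_le: "cw_r0 (f0J f J) \<le> ereal \<mu>"
  proof -
    have "Max (range (\<lambda>i. ereal (f0J f J v $ i / v $ i))) \<le> ereal \<mu>"
    proof (subst Max_le_iff, simp, simp, clarify)
      fix i
      show "ereal (f0J f J v $ i / v $ i) \<le> ereal \<mu>"
      proof (cases "i \<in> J")
        case False
        then show ?thesis using mupos by (simp add: f0J_def proj0_def)
      next
        case True
        define y where "y = proj0 J v"
        define S where "S = (\<lambda>e. f (\<chi> j. y $ j + e) $ i) ` {e::real. 0 < e}"
        have ypos: "\<And>j. 0 \<le> y $ j" using vpos by (simp add: y_def proj0_def less_imp_le)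
        have Spos: "\<And>e. 0 < e \<Longrightarrow> 0 < f (\<chi> j. y $ j + e) $ i"
        proof -
          fix e :: real assume "0 < e"
          then have "pos_vec (\<chi> j. y $ j + e)" using ypos
            by (simp add: pos_vec_def add_nonneg_pos)
          then show "0 < f (\<chi> j. y $ j + e) $ i" using assms(1)
            by (simp add: maps_pos_def pos_vec_def)
        qed
        have bdd: "bdd_below S" unfolding S_def
          by (rule bdd_belowI[of _ 0]) (auto dest: Spos intro: less_imp_le)
        have bnd: "\<And>e. 0 < e \<Longrightarrow> Inf S \<le> (1 + e / m) * (\<mu> * v $ i)"
        proof -
          fix e :: real assume ep: "0 < e"
          have "Inf S \<le> f (\<chi> j. y $ j + e) $ i"
            using bdd ep unfolding S_def by (intro cInf_lower) auto
          also have "\<dots> \<le> f ((1 + e / m) *\<^sub>R v) $ i"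
          proof -
            have p1: "pos_vec (\<chi> j. y $ j + e)" using ypos ep
              by (simp add: pos_vec_def add_nonneg_pos)
            have p2: "pos_vec ((1 + e / m) *\<^sub>R v)" using vpos ep mpos
              by (simp add: pos_vec_def add_pos_pos)
            have le: "\<forall>j. (\<chi> j. y $ j + e) $ j \<le> ((1 + e / m) *\<^sub>R v) $ j"
            proof
              fix j
              have "e \<le> e * (v $ j / m)" using mle[of j] mpos ep
                by (simp add: le_divide_eq)
              then have "e \<le> e / m * v $ j" by simp
              moreover have "y $ j \<le> v $ j" using vpos[of j] by (simp add: y_def proj0_def less_imp_le)
              ultimately show "(\<chi> j. y $ j + e) $ j \<le> ((1 + e / m) *\<^sub>R v) $ j"
                by (simp add: algebra_simps)
            qed
            show ?thesis using assms(2) p1 p2 le unfolding order_preserving_pos_def by blast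
          qed
          also have "\<dots> = (1 + e / m) * (\<mu> * v $ i)"
            using assms(3) vp ep mpos ev unfolding homogeneous_pos_def
            by (simp add: add_pos_pos)
          finally show "Inf S \<le> (1 + e / m) * (\<mu> * v $ i)" .
        qed
        have "Inf S \<le> \<mu> * v $ i"
        proof (rule field_le_epsilon)
          fix d :: real assume dp: "0 < d"
          define e where "e = d * m / (\<mu> * v $ i)"
          have mv: "0 < \<mu> * v $ i" using mupos vpos by simp
          have ep: "0 < e" unfolding e_def using dp mpos mv by simp
          have "(1 + e / m) * (\<mu> * v $ i) = \<mu> * v $ i + d"
            unfolding e_def using mpos mv mupos vpos[of i] by (simp add: field_simps)
          then show "Inf S \<le> \<mu> * v $ i + d" using bnd[OF ep] by simp
        qed
        moreover have "f0J f J v $ i = Inf S"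
          using True by (simp add: f0J_def proj0_def ext0_def S_def y_def)
        ultimately have "f0J f J v $ i / v $ i \<le> \<mu>"
          using vpos[of i] by (simp add: divide_le_eq)
        then show ?thesis by simp
      qed
    qed
    moreover have "cw_r0 (f0J f J) \<le> Max (range (\<lambda>i. ereal (f0J f J v $ i / v $ i)))"
      unfolding cw_r0_def using vp by (intro INF_lower) simp
    ultimately show ?thesis by (rule order_trans[rotated])
  qed
  have l_ge: "ereal \<mu> \<le> cw_lambda_inf (finfJ f (UNIV - J))"
  proof -
    let ?g = "finfJ f (UNIV - J)"
    let ?x = "(\<chi> j. ereal (v $ j))"
    have "ereal \<mu> \<le> Min (range (\<lambda>i. ?g ?x $ i / ereal (v $ i)))"
    proof (subst Min_ge_iff, simp, simp, clarify)
      fix i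
      show "ereal \<mu> \<le> ?g ?x $ i / ereal (v $ i)"
      proof (cases "i \<in> J")
        case True
        then show ?thesis using vpos[of i] by (simp add: finfJ_def projinf_def)
      next
        case False
        define w where "w = (\<chi> j. real_of_ereal (min (projinf (UNIV - J) ?x $ j) (ereal M)))"
        have wv: "\<And>j. w $ j = (if j \<in> J then M else v $ j)"
          using Mge by (simp add: w_def projinf_def min_def)
        have wge: "\<forall>j. v $ j \<le> w $ j" using Mge wv by simp
        have wp: "pos_vec w" using wge vpos unfolding pos_vec_def by (meson less_le_trans)
        have "f v $ i \<le> f w $ i" using assms(2) vp wp wge unfolding order_preserving_pos_def by blast
        then have "ereal (\<mu> * v $ i) \<le> ereal (f w $ i)" using ev by simp
        also have "\<dots> \<le> extinf f (projinf (UNIV - J) ?x) $ i"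
          unfolding extinf_def w_def using Mpos by (simp, intro SUP_upper) simp
        also have "\<dots> = ?g ?x $ i" using False by (simp add: finfJ_def projinf_def)
        finally have h: "ereal (\<mu> * v $ i) \<le> ?g ?x $ i" .
        have "ereal \<mu> = ereal (\<mu> * v $ i) / ereal (v $ i)" using vpos[of i] by simp
        also have "\<dots> \<le> ?g ?x $ i / ereal (v $ i)"
          using h vpos[of i] by (intro ereal_divide_right_mono) auto
        finally show ?thesis .
      qed
    qed
    also have "\<dots> \<le> cw_lambda_inf ?g"
      unfolding cw_lambda_inf_def using vp by (intro SUP_upper) simp
    finally show ?thesis .
  qed
  show False using r_le l_ge assms(6) by simp
qed

end
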